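(* Let $\mathfrak{s}$ be a binary word over $\{\mathsf{A},\mathsf{B}\}$ that is either empty or ends with the letter $\mathsf{B}$, and let $n\ge 0$ be an integer. Then \[ \max_{|\mathfrak{t}|=n} \mathsf{P}(\mathfrak{s}\circ\mathfrak{t}) = \mathsf{P}(\mathfrak{s}\circ\mathfrak{z}_n), \] where the maximum is over all binary words $\mathfrak{t}$ of length $n$. Moreover, if $\mathfrak{s}$ is nonempty, then $\mathfrak{t}=\mathfrak{z}_n$ is the only word of length $n$ attaining this maximum.
   Context: $\circ$ denotes concatenation, $|\mathfrak{t}|$ the length of $\mathfrak{t}$. $\mathsf{P}(\mathfrak{w})$ is the number of distinct words that are subsequences (not necessarily contiguous) of $\mathfrak{w}$, the empty word included. $\mathfrak{z}_n$ denotes the alternating word $\mathsf{ABAB}\ldots$ of length $n$ starting with $\mathsf{A}$ (so $\mathfrak{z}_0$ is empty). *)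

theory Defs
  imports Main "HOL-Library.Sublist"
begin

datatype letter = A | B

definition P :: "letter list \<Rightarrow> nat" where
  "P w = card {u. subseq u w}"

definition z :: "nat \<Rightarrow> letter list" where
  "z n = map (\<lambda>i. if even i then A else B) [0..<n]"

end

theory Submission
  imports Defs
begin

definition SS :: "letter list \<Rightarrow> letter list set" where
  "SS w = {u. subseq u w}"

definition E :: "letter \<Rightarrow> letter list \<Rightarrow> nat" where
  "E c w = card {u \<in> SS w. u \<noteq> [] \<and> last u = c}"

fun swp :: "letter \<Rightarrow> letter" where
  "swp A = B" | "swp B = A"

fun alt :: "letter \<Rightarrow> nat \<Rightarrow> letter list" where
  "alt c 0 = []" | "alt c (Suc n) = c # alt (swp c) n"

lemma letter_UNIV: "(UNIV :: letter set) = {A, B}"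
  using letter.exhaust by auto

lemma P_SS: "P w = card (SS w)"
  unfolding P_def SS_def by (rule refl)

lemma SS_finite: "finite (SS w)"
  unfolding SS_def by (metis set_subseqs_eq List.finite_set)

lemma SS_Nil: "[] \<in> SS w"
  unfolding SS_def mem_Collect_eq by (rule list_emb_Nil)

lemma SS_same: "v @ [c] \<in> SS (w @ [c]) \<longleftrightarrow> v \<in> SS w"
  unfolding SS_def mem_Collect_eq by (rule subseq_append)

lemma subseq_snoc_other:
  assumes "c \<noteq> d"
  shows "subseq (v @ [c]) (w @ [d]) \<longleftrightarrow> subseq (v @ [c]) w"
proof
  assume "subseq (v @ [c]) (w @ [d])"
  then obtain xs1 xs2 where h: "v @ [c] = xs1 @ xs2" "subseq xs1 w" "subseq xs2 [d]"
    unfolding subseq_append_iff by blast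
  have "xs2 = [] \<or> xs2 = [d]" using h(3)
    by (cases xs2) (auto split: if_splits)
  then show "subseq (v @ [c]) w"
  proof
    assume "xs2 = []" then show ?thesis using h by simp
  next
    assume "xs2 = [d]" then have False using h assms by simp
    then show ?thesis ..
  qed
qed (rule subseq_rev_drop_many)

lemma SS_other: "c \<noteq> d \<Longrightarrow> v @ [c] \<in> SS (w @ [d]) \<longleftrightarrow> v @ [c] \<in> SS w"
  unfolding SS_def mem_Collect_eq by (rule subseq_snoc_other)

lemma G1:
  assumes "finite S" "[] \<in> S"
  shows "card S = 1 + card {u \<in> S. u \<noteq> [] \<and> last u = A} + card {u \<in> S. u \<noteq> [] \<and> last u = B}"
proof -
  let ?SA = "{u \<in> S. u \<noteq> [] \<and> last u = A}"
  let ?SB = "{u \<in> S. u \<noteq> [] \<and> last u = B}"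
  have lt: "u = [] \<or> last u = A \<or> last u = B" for u :: "letter list" by (cases "last u") auto
  have eq: "S = insert [] (?SA \<union> ?SB)" using lt assms(2) by auto
  have f: "finite ?SA" "finite ?SB" using assms(1) by auto
  have "card S = card (insert [] (?SA \<union> ?SB))" using eq by (rule arg_cong)
  also have "\<dots> = 1 + card (?SA \<union> ?SB)" using f by simp
  also have "card (?SA \<union> ?SB) = card ?SA + card ?SB"
    using f by (intro card_Un_disjoint) auto
  finally show ?thesis by simp
qed

lemma P_split: "P w = 1 + E A w + E B w"
  unfolding P_SS E_def by (rule G1[OF SS_finite SS_Nil])

lemma G2:
  assumes "\<And>v. v @ [c] \<in> T \<longleftrightarrow> v \<in> S"
  shows "{u \<in> T. u \<noteq> [] \<and> last u = c} = (\<lambda>v. v @ [c]) ` S"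
proof (intro set_eqI iffI)
  fix u assume "u \<in> {u \<in> T. u \<noteq> [] \<and> last u = c}"
  then have u: "u \<in> T" "u \<noteq> []" "last u = c" by auto
  then have "u = butlast u @ [c]" by (metis append_butlast_last_id)
  with u(1) assms[of "butlast u"] show "u \<in> (\<lambda>v. v @ [c]) ` S" by (metis image_eqI)
qed (use assms in auto)

lemma G3:
  assumes "\<And>v. v @ [c] \<in> T \<longleftrightarrow> v @ [c] \<in> S"
  shows "{u \<in> T. u \<noteq> [] \<and> last u = c} = {u \<in> S. u \<noteq> [] \<and> last u = c}"
proof -
  have "u \<in> T \<longleftrightarrow> u \<in> S" if "u \<noteq> []" "last u = c" for u
  proof -
    have "u = butlast u @ [c]" using that by (metis append_butlast_last_id)
    then show ?thesis using assms[of "butlast u"] by metis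
  qed
  then show ?thesis by blast
qed

lemma E_snoc: "E c (w @ [d]) = (if d = c then P w else E c w)"
proof (cases "d = c")
  case True
  have "{u \<in> SS (w @ [d]). u \<noteq> [] \<and> last u = c} = (\<lambda>v. v @ [c]) ` SS w"
    using True by (intro G2) (simp only: SS_same)
  moreover have "inj (\<lambda>v. v @ [c])" by (auto intro: injI)
  ultimately show ?thesis using True unfolding E_def P_SS
    by (simp add: card_image inj_on_subset)
next
  case False
  have "{u \<in> SS (w @ [d]). u \<noteq> [] \<and> last u = c} = {u \<in> SS w. u \<noteq> [] \<and> last u = c}"
    by (intro G3) (rule SS_other, use False in auto)
  then show ?thesis using False unfolding E_def by simp
qed

lemma E_flip_P: "P w = 1 + E c w + E (swp c) w"
  by (cases c) (simp_all add: P_split)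

lemma dom:
  "length t = n \<Longrightarrow> E c s' \<le> E (swp c) s' \<Longrightarrow>
   min (E A s) (E B s) \<le> E c s' \<Longrightarrow> max (E A s) (E B s) \<le> E (swp c) s' \<Longrightarrow>
   P (s @ t) \<le> P (s' @ alt c n) \<and>
   ((min (E A s) (E B s) < E c s' \<or> max (E A s) (E B s) < E (swp c) s') \<longrightarrow>
     P (s @ t) < P (s' @ alt c n))"
proof (induction n arbitrary: s s' c t)
  case 0
  then show ?case using E_flip_P[of s' c] by (auto simp: P_split)
next
  case (Suc n)
  then obtain d t' where t: "t = d # t'" "length t' = n" by (cases t) auto
  let ?s1 = "s @ [d]" and ?s1' = "s' @ [c]"
  have ff: "swp (swp c) = c" "swp c \<noteq> c" by (cases c; simp)+
  have e1': "E (swp c) ?s1' = E (swp c) s'" "E (swp (swp c)) ?s1' = 1 + E c s' + E (swp c) s'"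
    using ff by (simp_all add: E_snoc E_flip_P[of s' c])
  have e1: "E d ?s1 = 1 + E A s + E B s" "E (swp d) ?s1 = E (swp d) s"
    by (cases d; simp add: E_snoc P_split)+
  have m1: "min (E A ?s1) (E B ?s1) = E (swp d) s" "max (E A ?s1) (E B ?s1) = 1 + E A s + E B s"
    using e1 by (cases d; auto)+
  have fd: "E (swp d) s \<le> max (E A s) (E B s)" by (cases d) auto
  have sum: "min (E A s) (E B s) + max (E A s) (E B s) = E A s + E B s" by auto
  have IH: "P (?s1 @ t') \<le> P (?s1' @ alt (swp c) n) \<and>
     ((min (E A ?s1) (E B ?s1) < E (swp c) ?s1' \<or> max (E A ?s1) (E B ?s1) < E (swp (swp c)) ?s1') \<longrightarrow>
     P (?s1 @ t') < P (?s1' @ alt (swp c) n))"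
    apply (rule Suc.IH[OF t(2)])
    using e1' m1 fd sum Suc.prems by linarith+
  have "(min (E A s) (E B s) < E c s' \<or> max (E A s) (E B s) < E (swp c) s') \<longrightarrow>
        max (E A ?s1) (E B ?s1) < E (swp (swp c)) ?s1'"
    using e1' m1 sum Suc.prems by linarith
  then show ?case using IH t by simp
qed

lemma uniq:
  "length t = n \<Longrightarrow> E c s < E (swp c) s \<Longrightarrow> t \<noteq> alt c n \<Longrightarrow> P (s @ t) < P (s @ alt c n)"
proof (induction n arbitrary: s c t)
  case 0
  then show ?case by simp
next
  case (Suc n)
  then obtain d t' where t: "t = d # t'" "length t' = n" by (cases t) auto
  have ff: "swp (swp c) = c" "swp c \<noteq> c" by (cases c; simp)+
  show ?case
  proof (cases "d = c")
    case True
    then have ne: "t' \<noteq> alt (swp c) n" using Suc.prems t by simp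
    have "E (swp c) (s @ [c]) < E (swp (swp c)) (s @ [c])"
      using ff by (simp add: E_snoc E_flip_P[of s c])
    from Suc.IH[OF t(2) this ne] show ?thesis using t True by simp
  next
    case False
    then have dc: "d = swp c" by (cases c; cases d; simp)
    let ?s1 = "s @ [d]" and ?s1' = "s @ [c]"
    have e1': "E (swp c) ?s1' = E (swp c) s" "E (swp (swp c)) ?s1' = 1 + E c s + E (swp c) s"
      using ff by (simp_all add: E_snoc E_flip_P[of s c])
    have e1: "E c ?s1 = E c s" "E (swp c) ?s1 = 1 + E c s + E (swp c) s"
      using dc ff by (simp_all add: E_snoc E_flip_P[of s c])
    have m1: "min (E A ?s1) (E B ?s1) = E c s" "max (E A ?s1) (E B ?s1) = 1 + E c s + E (swp c) s"
      using e1 by (cases c; auto)+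
    have "P (?s1 @ t') < P (?s1' @ alt (swp c) n)"
      using dom[OF t(2), of "swp c" ?s1' ?s1] e1' m1 Suc.prems ff by simp
    then show ?thesis using t by simp
  qed
qed

definition lt :: "nat \<Rightarrow> letter" where "lt i = (if even i then A else B)"

lemma swp_lt: "swp (lt k) = lt (Suc k)"
  unfolding lt_def by simp

lemma z_gen: "map lt [k..<k+n] = alt (lt k) n"
proof (induction n arbitrary: k)
  case 0 then show ?case by simp
next
  case (Suc n)
  have "[k..<k + Suc n] = k # [Suc k..<Suc k + n]" by (simp add: upt_rec)
  then have "map lt [k..<k + Suc n] = lt k # map lt [Suc k..<Suc k + n]" by simp
  also have "\<dots> = lt k # alt (lt (Suc k)) n" using Suc.IH[of "Suc k"] by simp
  also have "\<dots> = alt (lt k) (Suc n)" by (simp add: swp_lt)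
  finally show ?case .
qed

lemma z_alt: "z n = alt A n"
proof -
  have "z n = map lt [0..<0+n]" unfolding z_def lt_def by simp
  also have "\<dots> = alt (lt 0) n" by (rule z_gen)
  finally show ?thesis by (simp add: lt_def)
qed

theorem theorem3:
  fixes s :: "letter list" and n :: nat
  assumes "s = [] \<or> last s = B"
  shows "Max ((\<lambda>t. P (s @ t)) ` {t. length t = n}) = P (s @ z n) \<and>
         (s \<noteq> [] \<longrightarrow> (\<forall>t. length t = n \<and> P (s @ t) = P (s @ z n) \<longrightarrow> t = z n))"
proof -
  have le: "E A s \<le> E B s \<and> (s \<noteq> [] \<longrightarrow> E A s < E B s)"
  proof (cases "s = []")
    case True
    have "SS [] = {[]}" unfolding SS_def by auto
    then have "E c [] = 0" for c unfolding E_def by simp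
    then show ?thesis using True by simp
  next
    case False
    then obtain s0 where "s = s0 @ [B]" using assms by (metis append_butlast_last_id)
    then show ?thesis by (simp add: E_snoc P_split)
  qed
  have fin: "finite {t :: letter list. length t = n}"
  proof -
    have fu: "finite (UNIV :: letter set)" by (simp add: letter_UNIV)
    have "{t :: letter list. length t = n} = {t. set t \<subseteq> UNIV \<and> length t = n}" by blast
    then show ?thesis using finite_lists_length_eq[OF fu, of n] by simp
  qed
  have lz: "length (z n) = n" by (simp add: z_def)
  have bound: "P (s @ t) \<le> P (s @ z n)" if "length t = n" for t
    using dom[OF that, of A s s] le by (simp add: z_alt)
  have "Max ((\<lambda>t. P (s @ t)) ` {t. length t = n}) = P (s @ z n)"
  proof (rule Max_eqI)
    show "finite ((\<lambda>t. P (s @ t)) ` {t. length t = n})" using fin by (rule finite_imageI)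
    show "y \<le> P (s @ z n)" if "y \<in> (\<lambda>t. P (s @ t)) ` {t. length t = n}" for y
      using that bound by blast
    show "P (s @ z n) \<in> (\<lambda>t. P (s @ t)) ` {t. length t = n}" using lz by blast
  qed
  moreover have "s \<noteq> [] \<longrightarrow> (\<forall>t. length t = n \<and> P (s @ t) = P (s @ z n) \<longrightarrow> t = z n)"
  proof (intro impI allI)
    fix t assume ne: "s \<noteq> []" and h: "length t = n \<and> P (s @ t) = P (s @ z n)"
    show "t = z n"
    proof (rule ccontr)
      assume "t \<noteq> z n"
      then have "P (s @ t) < P (s @ z n)"
        using uniq[of t n A s] h le ne by (simp add: z_alt)
      then show False using h by simp
    qed
  qed
  ultimately show ?thesis by blast
qed

end
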